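(* Let $(J,\mathcal F)$ and $w^S_j>0$ be as in the context, let $\mathbf c$ be $\mathcal F$-admissible, and let $\mathrm{AG}_2$ on input $\mathbf c$ produce $\boldsymbol\pi$, $\boldsymbol\nu$, sets $S_k$ and quantities $\nu^{S_k}_j$ ($j\in S_k$). Then for every $1\le m\le n$, $$\nu_{\pi_m}=\min\{\nu^{S_m}_j:j\in S_m\}.$$
   Context: $J$ finite, $|J|=n$; $\mathcal F\subseteq2^J$ with $\emptyset\in\mathcal F$, each nonempty $S\in\mathcal F$ having nonempty $\partial^-S=\{j\in S:S\setminus\{j\}\in\mathcal F\}$, each $S\in\mathcal F\ne J$ having $j\notin S$ with $S\cup\{j\}\in\mathcal F$. Coefficients $w^S_j>0$ for $j\in S\in\mathcal F$. $\mathrm{AG}_2$ on input $\mathbf c$: $S_1=J$, $\nu^{S_1}_j=c_j/w^{S_1}_j$ ($j\in J$), $\pi_1\in\arg\min\{\nu^{S_1}_j:j\in\partial^-S_1\}$, $\nu_{\pi_1}=\nu^{S_1}_{\pi_1}$; for $k=2..n$: $S_k=S_{k-1}\setminus\{\pi_{k-1}\}$, $\nu^{S_k}_j=\nu^{S_{k-1}}_j+(w^{S_{k-1}}_j/w^{S_k}_j-1)[\nu^{S_{k-1}}_j-\nu^{S_{k-1}}_{\pi_{k-1}}]$ ($j\in S_k$), $\pi_k\in\arg\min\{\nu^{S_k}_j:j\in\partial^-S_k\}$, $\nu_{\pi_k}=\nu^{S_k}_{\pi_k}$. $\mathbf c$ is $\mathcal F$-admissible if the output satisfies $\nu_{\pi_1}\le\cdots\le\nu_{\pi_n}$.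 *)

theory Defs
  imports Complex_Main
begin

definition lower_bd :: "'a set set \<Rightarrow> 'a set \<Rightarrow> 'a set" where
  "lower_bd F S = {j \<in> S. S - {j} \<in> F}"

definition AG_setting :: "'a set \<Rightarrow> 'a set set \<Rightarrow> ('a set \<Rightarrow> 'a \<Rightarrow> real) \<Rightarrow> bool" where
  "AG_setting J F w \<longleftrightarrow>
     finite J \<and> F \<subseteq> Pow J \<and> {} \<in> F \<and>
     (\<forall>S\<in>F. S \<noteq> {} \<longrightarrow> lower_bd F S \<noteq> {}) \<and>
     (\<forall>S\<in>F. S \<noteq> J \<longrightarrow> (\<exists>j\<in>J - S. insert j S \<in> F)) \<and>
     (\<forall>S\<in>F. \<forall>j\<in>S. w S j > 0)"

text \<open>Sets S_k of AG_2 (1-based: S_1 = J, S_k = S_(k-1) - {pi_(k-1)});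
  index 0 is an unused dummy.\<close>
primrec AG_S :: "'a set \<Rightarrow> (nat \<Rightarrow> 'a) \<Rightarrow> nat \<Rightarrow> 'a set" where
  "AG_S J \<pi> 0 = J"
| "AG_S J \<pi> (Suc k) = (if k = 0 then J else AG_S J \<pi> k - {\<pi> k})"

text \<open>Quantities nu^(S_k)_j of AG_2 (1-based; index 0 is an unused dummy).\<close>
primrec AG_nu :: "'a set \<Rightarrow> ('a set \<Rightarrow> 'a \<Rightarrow> real) \<Rightarrow> ('a \<Rightarrow> real) \<Rightarrow> (nat \<Rightarrow> 'a)
                   \<Rightarrow> nat \<Rightarrow> 'a \<Rightarrow> real" where
  "AG_nu J w c \<pi> 0 j = c j / w J j"
| "AG_nu J w c \<pi> (Suc k) j =
     (if k = 0 then c j / w J j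
      else AG_nu J w c \<pi> k j
           + (w (AG_S J \<pi> k) j / w (AG_S J \<pi> (Suc k)) j - 1)
             * (AG_nu J w c \<pi> k j - AG_nu J w c \<pi> k (\<pi> k)))"

definition AG2_run :: "'a set \<Rightarrow> 'a set set \<Rightarrow> ('a set \<Rightarrow> 'a \<Rightarrow> real) \<Rightarrow> ('a \<Rightarrow> real)
                       \<Rightarrow> (nat \<Rightarrow> 'a) \<Rightarrow> bool" where
  "AG2_run J F w c \<pi> \<longleftrightarrow>
     (\<forall>k\<in>{1..card J}. \<pi> k \<in> lower_bd F (AG_S J \<pi> k) \<and>
        (\<forall>j\<in>lower_bd F (AG_S J \<pi> k). AG_nu J w c \<pi> k (\<pi> k) \<le> AG_nu J w c \<pi> k j))"

definition AG_out :: "'a set \<Rightarrow> ('a set \<Rightarrow> 'a \<Rightarrow> real) \<Rightarrow> ('a \<Rightarrow> real) \<Rightarrow> (nat \<Rightarrow> 'a)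
                      \<Rightarrow> nat \<Rightarrow> real" where
  "AG_out J w c \<pi> k = AG_nu J w c \<pi> k (\<pi> k)"

text \<open>F-admissibility: the output of the run is nondecreasing.\<close>
definition AG2_admissible_run :: "'a set \<Rightarrow> 'a set set \<Rightarrow> ('a set \<Rightarrow> 'a \<Rightarrow> real)
                                  \<Rightarrow> ('a \<Rightarrow> real) \<Rightarrow> (nat \<Rightarrow> 'a) \<Rightarrow> bool" where
  "AG2_admissible_run J F w c \<pi> \<longleftrightarrow>
     AG2_run J F w c \<pi> \<and>
     (\<forall>k. 1 \<le> k \<and> k < card J \<longrightarrow> AG_out J w c \<pi> k \<le> AG_out J w c \<pi> (Suc k))"

end

theory Submission
  imports Defs
begin

lemma J_in_F:
  assumes "AG_setting J F w" shows "J \<in> F"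
proof -
  have fin: "finite J" and sub: "F \<subseteq> Pow J" and e: "{} \<in> F"
    and ext: "\<forall>S\<in>F. S \<noteq> J \<longrightarrow> (\<exists>j\<in>J - S. insert j S \<in> F)"
    using assms unfolding AG_setting_def by auto
  have finF: "finite F" using sub fin by (meson finite_Pow_iff finite_subset)
  define M where "M = Max (card ` F)"
  have "M \<in> card ` F" unfolding M_def using finF e by (intro Max_in) auto
  then obtain S where S0: "S \<in> F" "card S = M" by auto
  have S: "S \<in> F" "\<forall>T\<in>F. card T \<le> card S"
    using S0 finF unfolding M_def by auto
  show ?thesis
  proof (rule ccontr)
    assume "J \<notin> F"
    then have "S \<noteq> J" using S by auto
    then obtain j where j: "j \<in> J - S" "insert j S \<in> F" using ext S by auto
    have "finite S" using S sub fin by (meson PowD finite_subset subsetD)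
    then have "card (insert j S) = Suc (card S)" using j by simp
    with S j show False by fastforce
  qed
qed

lemma S_Suc: "k \<ge> 1 \<Longrightarrow> AG_S J \<pi> (Suc k) = AG_S J \<pi> k - {\<pi> k}"
  by simp

lemma S_props:
  assumes st: "AG_setting J F w" and run: "AG2_run J F w c \<pi>"
    and k: "1 \<le> k" "k \<le> card J"
  shows "AG_S J \<pi> k \<in> F \<and> \<pi> k \<in> AG_S J \<pi> k \<and> AG_S J \<pi> (Suc k) \<in> F"
proof -
  have r: "\<pi> k \<in> lower_bd F (AG_S J \<pi> k)" using run k unfolding AG2_run_def by auto
  then have a: "\<pi> k \<in> AG_S J \<pi> k" "AG_S J \<pi> (Suc k) \<in> F"
    using k by (auto simp: lower_bd_def)
  have "AG_S J \<pi> k \<in> F"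
  proof (cases k)
    case 0 then show ?thesis using k by simp
  next
    case (Suc k')
    show ?thesis
    proof (cases "k' = 0")
      case True then show ?thesis using Suc J_in_F[OF st] by simp
    next
      case False
      have "\<pi> k' \<in> lower_bd F (AG_S J \<pi> k')" using run k Suc False unfolding AG2_run_def by auto
      then show ?thesis using Suc False by (simp add: lower_bd_def)
    qed
  qed
  with a show ?thesis by blast
qed

lemma S_sub: "AG_S J \<pi> k \<subseteq> J"
  by (induction k) auto

lemma S_card:
  assumes st: "AG_setting J F w" and run: "AG2_run J F w c \<pi>"
    and k: "1 \<le> k" "k \<le> Suc (card J)"
  shows "card (AG_S J \<pi> k) = Suc (card J) - k"
  using k
proof (induction k)
  case 0 then show ?case by simp
next
  case (Suc k)
  show ?case
  proof (cases "k = 0")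
    case True then show ?thesis by simp
  next
    case False
    then have "\<pi> k \<in> AG_S J \<pi> k" using S_props[OF st run, of k] Suc by auto
    moreover have "finite (AG_S J \<pi> k)"
      using S_sub st unfolding AG_setting_def by (meson finite_subset)
    ultimately show ?thesis using Suc False by simp
  qed
qed

lemma nu_step:
  assumes "k \<ge> 1"
  shows "AG_nu J w c \<pi> (Suc k) j - AG_nu J w c \<pi> k (\<pi> k)
    = (w (AG_S J \<pi> k) j / w (AG_S J \<pi> (Suc k)) j) * (AG_nu J w c \<pi> k j - AG_nu J w c \<pi> k (\<pi> k))"
  using assms by (simp add: algebra_simps del: AG_S.simps)

theorem proposition2:
  fixes J :: "'a set" and F :: "'a set set" and w :: "'a set \<Rightarrow> 'a \<Rightarrow> real"
    and c :: "'a \<Rightarrow> real" and \<pi> :: "nat \<Rightarrow> 'a"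
  assumes "AG_setting J F w"
    and "AG2_admissible_run J F w c \<pi>"
  shows "\<forall>m\<in>{1..card J}.
           AG_out J w c \<pi> m = Min ((\<lambda>j. AG_nu J w c \<pi> m j) ` AG_S J \<pi> m)"
proof
  fix m assume m: "m \<in> {1..card J}"
  note st = assms(1)
  have run: "AG2_run J F w c \<pi>" and adm: "\<And>k. 1 \<le> k \<Longrightarrow> k < card J \<Longrightarrow> AG_out J w c \<pi> k \<le> AG_out J w c \<pi> (Suc k)"
    using assms(2) unfolding AG2_admissible_run_def by auto
  have wpos: "\<And>S j. S \<in> F \<Longrightarrow> j \<in> S \<Longrightarrow> w S j > 0" using st unfolding AG_setting_def by auto
  have fin: "finite (AG_S J \<pi> m)" using S_sub st unfolding AG_setting_def by (meson finite_subset)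
  have pim: "\<pi> m \<in> AG_S J \<pi> m" using S_props[OF st run, of m] m by auto
  have le: "AG_nu J w c \<pi> m (\<pi> m) \<le> AG_nu J w c \<pi> m j" if j: "j \<in> AG_S J \<pi> m" for j
  proof (rule ccontr)
    assume "\<not> ?thesis"
    then have lt: "AG_nu J w c \<pi> m j < AG_nu J w c \<pi> m (\<pi> m)" by simp
    have inv: "j \<in> AG_S J \<pi> k \<and> AG_nu J w c \<pi> k j < AG_nu J w c \<pi> k (\<pi> k)"
      if "m \<le> k" "k \<le> card J" for k
      using that
    proof (induction k)
      case 0 then show ?case using m by simp
    next
      case (Suc k)
      show ?case
      proof (cases "m = Suc k")
        case True then show ?thesis using j lt by simp
      next
        case False
        then have k: "m \<le> k" "k < card J" "1 \<le> k" using Suc m by auto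
        then have IH: "j \<in> AG_S J \<pi> k" "AG_nu J w c \<pi> k j < AG_nu J w c \<pi> k (\<pi> k)"
          using Suc by auto
        have jn: "j \<noteq> \<pi> k" using IH by auto
        have js: "j \<in> AG_S J \<pi> (Suc k)" using IH jn k by simp
        have SF: "AG_S J \<pi> k \<in> F" "AG_S J \<pi> (Suc k) \<in> F" using S_props[OF st run, of k] k by auto
        have rpos: "w (AG_S J \<pi> k) j / w (AG_S J \<pi> (Suc k)) j > 0"
          using wpos[OF SF(1) IH(1)] wpos[OF SF(2) js] by simp
        have "AG_nu J w c \<pi> (Suc k) j - AG_nu J w c \<pi> k (\<pi> k) < 0"
        proof -
          have "w (AG_S J \<pi> k) j / w (AG_S J \<pi> (Suc k)) j * (AG_nu J w c \<pi> k j - AG_nu J w c \<pi> k (\<pi> k)) < 0"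
            by (rule mult_pos_neg[OF rpos]) (use IH(2) in linarith)
          then show ?thesis using nu_step[OF k(3), where J=J and w=w and c=c and \<pi>=\<pi> and j=j] by linarith
        qed
        moreover have "AG_nu J w c \<pi> k (\<pi> k) \<le> AG_nu J w c \<pi> (Suc k) (\<pi> (Suc k))"
          using adm[OF k(3) k(2)] unfolding AG_out_def .
        ultimately show ?thesis using js by linarith
      qed
    qed
    have n: "card J \<ge> 1" using m by auto
    have c1: "j \<in> AG_S J \<pi> (card J)" "j \<noteq> \<pi> (card J)" using inv[of "card J"] m by auto
    then have "j \<in> AG_S J \<pi> (Suc (card J))" using n by simp
    moreover have "card (AG_S J \<pi> (Suc (card J))) = 0" using S_card[OF st run, of "Suc (card J)"] by simp
    moreover have "finite (AG_S J \<pi> (Suc (card J)))" using S_sub st unfolding AG_setting_def by (meson finite_subset)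
    ultimately show False by auto
  qed
  show "AG_out J w c \<pi> m = Min ((\<lambda>j. AG_nu J w c \<pi> m j) ` AG_S J \<pi> m)"
    unfolding AG_out_def
    by (rule Min_eqI[symmetric]) (use fin pim le in auto)
qed

end
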